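(* Assume A1. For every $s_0\in\mathbb R^n$, $\lambda_P(D\mathcal F,s_0)=\log\operatorname{diam}(D\mathcal F,s_0)$.
   Context: Assumption A1: there are functions $f^i:\mathbb R^{nm}\times[0,\infty)\to\mathbb R^n$, $i=1,\dots,m$, and $f:\mathbb R^n\to\mathbb R^n$ such that (a) $f^i(s,\dots,s,t)=f(s)$ for all $i,s,t$; (b) $x\mapsto f^i(x,t)$ is $C^1$ for each $t$, with Jacobian $DF^t(x)=(\partial f^i/\partial x^j(x,t))_{i,j}\in\mathbb R^{nm\times nm}$; (c) $\|DF^t(x)\|\le\phi(x)$ for some locally bounded $\phi$; (d) $\|DF^t(x)-DF^t(y)\|\le K(x,y)\|x-y\|$ for some locally bounded $K$, all $t$; (e) $f^i(x,t)$ and $DF^t(x)$ measurable in $t$. For $t_0\ge0$, $s_0\in\mathbb R^n$: $s(t)$ solves $\dot s=f(s)$, $s(t_0)=s_0$; $U(t,t_0,s_0)$ is the solution matrix (identity at $t_0$) of $\dot{\delta x}=DF^t(\hat s(t))\delta x$, $\hat s=[s^\top,\dots,s^\top]^\top$. For $U=(U_{ij})_{i,j=1}^m$ with $n\times n$ blocks, $U_i=[U_{i1},\dots,U_{im}]$, $\operatorname{diam}(U)=\max_{i,j}\|U_i-U_j\|$, and $\operatorname{diam}(D\mathcal F,s_0)=\limsup_{t\to\infty}\sup_{t_0\ge0}\{\operatorname{diam}(U(t+t_0,t_0,s_0))\}^{1/t}$. Let $P_0\in\mathbb R^{n\times n}$ be orthogonal and $P=[P_1,P_2]\in\mathbb R^{nm\times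 nm}$ orthogonal with $P_1=\frac1{\sqrt m}\mathbf 1_m\otimes P_0$ and $P_2\in\mathbb R^{nm\times n(m-1)}$. Let $\tilde U(t,t_0,s_0)=P_2^\top U(t,t_0,s_0)P_2$ (the solution matrix of $\dot\phi=P_2^\top DF^t(\hat s(t))P_2\phi$). Define $\lambda(D_P\mathcal F,\tilde u,s_0)=\limsup_{t\to\infty}\sup_{t_0\ge0}\frac1t\log\|\tilde U(t+t_0,t_0,s_0)\tilde u\|$ for $\tilde u\in\mathbb R^{n(m-1)}$ and $\lambda_P(D\mathcal F,s_0)=\max_{\tilde u}\lambda(D_P\mathcal F,\tilde u,s_0)$. *)

theory Defs
  imports "HOL-Analysis.Analysis"
begin

text \<open>State space R^{nm} is modelled as real^('m::finite \<times> 'n::finite): component (i,k) is the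
  k-th coordinate of the i-th block (i = 1..m, k = 1..n).\<close>

definition locally_bounded :: "('a::metric_space \<Rightarrow> real) \<Rightarrow> bool" where
  "locally_bounded g \<longleftrightarrow> (\<forall>x. \<exists>e>0. bounded (g ` ball x e))"

definition diag_state :: "real^'n \<Rightarrow> real^('m::finite \<times> 'n::finite)" where
  "diag_state s = (\<chi> r. s $ snd r)"

definition stack_field :: "('m \<Rightarrow> real^('m::finite \<times> 'n::finite) \<Rightarrow> real \<Rightarrow> real^'n) \<Rightarrow> real \<Rightarrow> real^('m::finite \<times> 'n::finite) \<Rightarrow> real^('m::finite \<times> 'n::finite)" where
  "stack_field F t x = (\<chi> r. F (fst r) x t $ snd r)"

definition block_row :: "real^('m::finite \<times> 'n::finite)^('m::finite \<times> 'n::finite) \<Rightarrow> 'm \<Rightarrow> real^('m::finite \<times> 'n::finite)^'n" where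
  "block_row U i = (\<chi> k. U $ (i,k))"

definition diam_mat :: "real^('m::finite \<times> 'n::finite)^('m::finite \<times> 'n::finite) \<Rightarrow> real" where
  "diam_mat U = Max ((\<lambda>(i,j). norm (block_row U i - block_row U j)) ` UNIV)"

definition eln :: "ereal \<Rightarrow> ereal" where
  "eln x = (if x \<le> 0 then -\<infinity> else if x = \<infinity> then \<infinity> else ereal (ln (real_of_ereal x)))"

text \<open>diam(DF, s0), given the solution matrices U t0 t = U(t, t0, s0).\<close>
definition diam_rate :: "(real \<Rightarrow> real \<Rightarrow> real^('m::finite \<times> 'n::finite)^('m::finite \<times> 'n::finite)) \<Rightarrow> ereal" where
  "diam_rate U = Limsup at_top (\<lambda>t. SUP t0\<in>{0..}. ereal (diam_mat (U t0 (t + t0)) powr (1 / t)))"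

text \<open>P_1 = (1/sqrt m) 1_m \<otimes> P_0.\<close>
definition P1_of :: "real^'n::finite^'n \<Rightarrow> real^'n^('m::finite \<times> 'n::finite)" where
  "P1_of P0 = (\<chi> r. \<chi> l. P0 $ snd r $ l / sqrt (real CARD('m)))"

text \<open>The block matrix P = [P_1, P_2]; columns indexed by 'n + 'k.\<close>
definition block_P :: "real^'n^('m::finite \<times> 'n::finite) \<Rightarrow> real^'k::finite^('m::finite \<times> 'n::finite) \<Rightarrow> real^('n + 'k)^('m::finite \<times> 'n::finite)" where
  "block_P A B = (\<chi> r. \<chi> c. case c of Inl l \<Rightarrow> A $ r $ l | Inr j \<Rightarrow> B $ r $ j)"

text \<open>\<lambda>(D_P F, u, s0) with \<tilde>U(t,t0,s0) = P_2^T U(t,t0,s0) P_2.\<close>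
definition lyap_P :: "real^'k::finite^('m::finite \<times> 'n::finite) \<Rightarrow> (real \<Rightarrow> real \<Rightarrow> real^('m::finite \<times> 'n::finite)^('m::finite \<times> 'n::finite)) \<Rightarrow> real^'k \<Rightarrow> ereal" where
  "lyap_P P2 U u = Limsup at_top (\<lambda>t. SUP t0\<in>{0..}.
      ereal (1 / t) * eln (ereal (norm ((transpose P2 ** U t0 (t + t0) ** P2) *v u))))"

definition lambda_P :: "real^'k::finite^('m::finite \<times> 'n::finite) \<Rightarrow> (real \<Rightarrow> real \<Rightarrow> real^('m::finite \<times> 'n::finite)^('m::finite \<times> 'n::finite)) \<Rightarrow> ereal" where
  "lambda_P P2 U = (SUP u. lyap_P P2 U u)"

end

theory Submission
  imports Defs
begin



lemma eln_mono: "mono eln"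
  unfolding mono_def eln_def
proof (intro allI impI)
  fix x y :: ereal assume "x \<le> y"
  then show "(if x \<le> 0 then - \<infinity> else if x = \<infinity> then \<infinity> else ereal (ln (real_of_ereal x)))
         \<le> (if y \<le> 0 then - \<infinity> else if y = \<infinity> then \<infinity> else ereal (ln (real_of_ereal y)))"
    by (cases x; cases y) auto
qed

lemma lt_ln_iff: "0 < (s::real) \<Longrightarrow> a < ln s \<longleftrightarrow> exp a < s"
  by (metis exp_less_cancel_iff exp_ln)
lemma ln_lt_iff: "0 < (s::real) \<Longrightarrow> ln s < a \<longleftrightarrow> s < exp a"
  by (metis exp_less_cancel_iff exp_ln)

lemma eln_gt_iff: "a < eln y \<longleftrightarrow> y \<in> (case a of ereal r \<Rightarrow> {ereal (exp r)<..} | PInfty \<Rightarrow> {} | MInfty \<Rightarrow> {0<..})"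
proof (cases a; cases y)
  fix r s assume "a = ereal r" "y = ereal s" then show ?thesis
    using lt_ln_iff[of s r] exp_gt_zero[of r] by (auto simp: eln_def simp del: exp_gt_zero)
qed (auto simp: eln_def)

lemma eln_lt_iff: "eln y < b \<longleftrightarrow> y \<in> (case b of ereal r \<Rightarrow> {..<ereal (exp r)} | PInfty \<Rightarrow> {..<\<infinity>} | MInfty \<Rightarrow> {})"
proof (cases b; cases y)
  fix r s assume "b = ereal r" "y = ereal s" then show ?thesis
    using ln_lt_iff[of s r] exp_gt_zero[of r] by (auto simp: eln_def simp del: exp_gt_zero)
qed (auto simp: eln_def)

lemma eln_cont: "continuous_on UNIV eln"
  unfolding continuous_on_def
proof (intro ballI)
  fix x :: ereal
  show "(eln \<longlongrightarrow> eln x) (at x within UNIV)"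
  proof (rule order_tendstoI)
    fix a assume a: "a < eln x"
    define S where "S = (case a of ereal r \<Rightarrow> {ereal (exp r)<..} | PInfty \<Rightarrow> {} | MInfty \<Rightarrow> {0<..})"
    have "open S" unfolding S_def by (cases a) auto
    moreover have "x \<in> S" using a eln_gt_iff[of a x] S_def by simp
    moreover have "\<forall>y\<in>S. a < eln y" using eln_gt_iff[of a] S_def by simp
    ultimately show "eventually (\<lambda>y. a < eln y) (at x within UNIV)"
      unfolding eventually_at_topological by blast
  next
    fix a assume a: "eln x < a"
    define S where "S = (case a of ereal r \<Rightarrow> {..<ereal (exp r)} | PInfty \<Rightarrow> {..<\<infinity>} | MInfty \<Rightarrow> {})"
    have "open S" unfolding S_def by (cases a) auto
    moreover have "x \<in> S" using a eln_lt_iff[of x a] S_def by simp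
    moreover have "\<forall>y\<in>S. eln y < a" using eln_lt_iff[of _ a] S_def by simp
    ultimately show "eventually (\<lambda>y. eln y < a) (at x within UNIV)"
      unfolding eventually_at_topological by blast
  qed
qed

lemma eln_powr:
  assumes "t > 0" "d \<ge> 0"
  shows "eln (ereal (d powr (1/t))) = ereal (1/t) * eln (ereal d)"
proof (cases "d = 0")
  case True then show ?thesis using assms by (simp add: eln_def)
next
  case False then show ?thesis using assms by (simp add: eln_def ln_powr)
qed

lemma eln_scale:
  assumes "t > 0" "a \<ge> 0" "b \<ge> 0" "C > 0" "a \<le> C * b"
  shows "ereal (1/t) * eln (ereal a) \<le> ereal (ln C / t) + ereal (1/t) * eln (ereal b)"
proof (cases "a = 0")
  case True then show ?thesis using assms by (simp add: eln_def)
next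
  case False
  then have a0: "a > 0" using assms by auto
  have b0: "b > 0"
  proof (rule ccontr)
    assume "\<not> b > 0" then have "b = 0" using assms by auto
    then show False using assms a0 by auto
  qed
  have "ln a \<le> ln (C * b)" using a0 b0 assms by simp
  also have "\<dots> = ln C + ln b" using b0 assms by (simp add: ln_mult)
  finally have "ln a \<le> ln C + ln b" .
  then have "ln a / t \<le> (ln C + ln b) / t" using assms by (simp add: divide_right_mono)
  then have "ln a / t \<le> ln C / t + ln b / t" by (simp add: add_divide_distrib)
  moreover have "eln (ereal a) = ereal (ln a)" "eln (ereal b) = ereal (ln b)" using a0 b0 by (auto simp: eln_def)
  ultimately show ?thesis by simp
qed

lemma eln_mono_t:
  assumes "t > 0" "a \<le> b" "a \<ge> 0"
  shows "ereal (1/t) * eln (ereal a) \<le> ereal (1/t) * eln (ereal b)"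
proof -
  have "eln (ereal a) \<le> eln (ereal b)" using eln_mono assms by (auto simp: mono_def)
  then show ?thesis using assms by (intro ereal_mult_left_mono) auto
qed


lemma ereal_add_strict_aux: "Y < ereal z \<Longrightarrow> ereal a + Y < ereal (a + z)"
  by (cases Y) auto

lemma Limsup_shift_le:
  fixes X Y :: "real \<Rightarrow> ereal"
  assumes ev: "eventually (\<lambda>t. X t \<le> ereal (c / t) + Y t) at_top"
  shows "Limsup at_top X \<le> Limsup at_top Y"
  unfolding Limsup_le_iff
proof (intro allI impI)
  fix y assume y: "y > Limsup at_top Y"
  obtain z where z: "Limsup at_top Y < z" "z < y" using dense[OF y] by blast
  then obtain z' where z': "z = ereal z'" by (cases z) auto
  have ev1: "eventually (\<lambda>t. Y t < z) at_top" using Limsup_lessD[OF z(1)] .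
  have "((\<lambda>t. c / t) \<longlongrightarrow> 0) at_top"
    by (rule tendsto_divide_0[OF tendsto_const filterlim_at_top_imp_at_infinity[OF filterlim_ident]])
  then have "((\<lambda>t. ereal (c / t + z')) \<longlongrightarrow> ereal (0 + z')) at_top"
    by (intro tendsto_ereal tendsto_add tendsto_const)
  then have ev2: "eventually (\<lambda>t. ereal (c / t + z') < y) at_top"
    using z z' by (intro order_tendstoD(2)) auto
  show "eventually (\<lambda>t. X t < y) at_top"
    using ev ev1 ev2
  proof eventually_elim
    case (elim t)
    have "X t \<le> ereal (c / t) + Y t" by (rule elim(1))
    also have "\<dots> < ereal (c / t + z')" using elim(2) z' by (intro ereal_add_strict_aux) auto
    also have "\<dots> < y" by (rule elim(3))
    finally show ?case .
  qed
qed

lemma Limsup_Max_le: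
  fixes Z :: "'k::finite \<Rightarrow> real \<Rightarrow> ereal"
  shows "Limsup at_top (\<lambda>t. Max (range (\<lambda>k. Z k t))) \<le> Max (range (\<lambda>k. Limsup at_top (Z k)))"
  unfolding Limsup_le_iff
proof (intro allI impI)
  fix y assume "y > Max (range (\<lambda>k. Limsup at_top (Z k)))"
  then have "\<forall>k. y > Limsup at_top (Z k)" by simp
  then have "\<forall>k. eventually (\<lambda>t. Z k t < y) at_top" using Limsup_lessD by blast
  then have "eventually (\<lambda>t. \<forall>k. Z k t < y) at_top" by (simp add: eventually_all_finite)
  then show "eventually (\<lambda>t. Max (range (\<lambda>k. Z k t)) < y) at_top"
    by eventually_elim simp
qed

definition R :: "(real \<Rightarrow> real \<Rightarrow> real) \<Rightarrow> ereal" where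
  "R g = Limsup at_top (\<lambda>t. SUP t0\<in>{0..}. ereal (1 / t) * eln (ereal (g t t0)))"

lemma R_mono:
  assumes le: "\<And>t t0. t > 0 \<Longrightarrow> t0 \<ge> 0 \<Longrightarrow> g t t0 \<le> C * h t t0"
    and g0: "\<And>t t0. t > 0 \<Longrightarrow> t0 \<ge> 0 \<Longrightarrow> g t t0 \<ge> 0"
    and h0: "\<And>t t0. t > 0 \<Longrightarrow> t0 \<ge> 0 \<Longrightarrow> h t t0 \<ge> 0"
    and C: "C > 0"
  shows "R g \<le> R h"
  unfolding R_def
proof (rule Limsup_shift_le[where c = "ln C"])
  have "eventually (\<lambda>t. t > (0::real)) at_top" by (rule eventually_gt_at_top)
  then show "eventually (\<lambda>t. (SUP t0\<in>{0..}. ereal (1 / t) * eln (ereal (g t t0))) \<le>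
      ereal (ln C / t) + (SUP t0\<in>{0..}. ereal (1 / t) * eln (ereal (h t t0)))) at_top"
  proof eventually_elim
    case (elim t)
    show ?case
    proof (rule SUP_least)
      fix t0 :: real assume "t0 \<in> {0..}"
      then have t0: "t0 \<ge> 0" by simp
      have "ereal (1 / t) * eln (ereal (g t t0)) \<le> ereal (ln C / t) + ereal (1 / t) * eln (ereal (h t t0))"
        using eln_scale[OF elim g0[OF elim t0] h0[OF elim t0] C le[OF elim t0]] .
      also have "\<dots> \<le> ereal (ln C / t) + (SUP t0\<in>{0..}. ereal (1 / t) * eln (ereal (h t t0)))"
        using t0 by (intro add_left_mono SUP_upper) auto
      finally show "ereal (1 / t) * eln (ereal (g t t0)) \<le> ereal (ln C / t) + (SUP t0\<in>{0..}. ereal (1 / t) * eln (ereal (h t t0)))" .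
    qed
  qed
qed

lemma R_Max:
  fixes h :: "'k::finite \<Rightarrow> real \<Rightarrow> real \<Rightarrow> real"
  assumes h0: "\<And>q t t0. t > 0 \<Longrightarrow> t0 \<ge> 0 \<Longrightarrow> h q t t0 \<ge> 0"
  shows "R (\<lambda>t t0. Max (range (\<lambda>q. h q t t0))) \<le> Max (range (\<lambda>q. R (h q)))"
proof -
  have "R (\<lambda>t t0. Max (range (\<lambda>q. h q t t0))) \<le>
     Limsup at_top (\<lambda>t. Max (range (\<lambda>q. SUP t0\<in>{0..}. ereal (1 / t) * eln (ereal (h q t t0)))))"
    unfolding R_def
  proof (rule Limsup_mono)
    have "eventually (\<lambda>t. t > (0::real)) at_top" by (rule eventually_gt_at_top)
    then show "eventually (\<lambda>t. (SUP t0\<in>{0..}. ereal (1 / t) * eln (ereal (Max (range (\<lambda>q. h q t t0)))))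
       \<le> Max (range (\<lambda>q. SUP t0\<in>{0..}. ereal (1 / t) * eln (ereal (h q t t0))))) at_top"
    proof eventually_elim
      case (elim t)
      show ?case
      proof (rule SUP_least)
        fix t0 :: real assume "t0 \<in> {0..}"
        then have t0: "t0 \<ge> 0" by simp
        have "Max (range (\<lambda>q. h q t t0)) \<in> range (\<lambda>q. h q t t0)"
          by (rule Max_in) auto
        then obtain q where q: "Max (range (\<lambda>q. h q t t0)) = h q t t0" by blast
        have "ereal (1 / t) * eln (ereal (Max (range (\<lambda>q. h q t t0)))) = ereal (1 / t) * eln (ereal (h q t t0))"
          using q by simp
        also have "\<dots> \<le> (SUP t0\<in>{0..}. ereal (1 / t) * eln (ereal (h q t t0)))"
          using t0 by (intro SUP_upper) auto
        also have "\<dots> \<le> Max (range (\<lambda>q. SUP t0\<in>{0..}. ereal (1 / t) * eln (ereal (h q t t0))))"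
          by (intro Max_ge) auto
        finally show "ereal (1 / t) * eln (ereal (Max (range (\<lambda>q. h q t t0)))) \<le> Max (range (\<lambda>q. SUP t0\<in>{0..}. ereal (1 / t) * eln (ereal (h q t t0))))" .
      qed
    qed
  qed
  also have "\<dots> \<le> Max (range (\<lambda>q. R (h q)))"
    unfolding R_def by (rule Limsup_Max_le[where Z = "\<lambda>q t. SUP t0\<in>{0..}. ereal (1 / t) * eln (ereal (h q t t0))"])
  finally show ?thesis .
qed

lemma eln_SUP:
  assumes "S \<noteq> {}"
  shows "eln (SUP x\<in>S. f x) = (SUP x\<in>S. eln (f x))"
proof -
  have "eln (Sup (f ` S)) = (SUP s\<in>f ` S. eln s)"
    using assms eln_mono eln_cont
    by (intro continuous_at_Sup_mono) (auto intro: continuous_on_imp_continuous_within)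
  then show ?thesis by (simp add: image_comp)
qed

lemma eln_diam_rate:
  assumes d0: "\<And>t t0. d t t0 \<ge> 0"
  shows "eln (Limsup at_top (\<lambda>t. SUP t0\<in>{0..}. ereal (d t t0 powr (1 / t)))) = R d"
proof -
  have "eln (Limsup at_top (\<lambda>t. SUP t0\<in>{0..}. ereal (d t t0 powr (1 / t)))) =
      Limsup at_top (\<lambda>t. eln (SUP t0\<in>{0..}. ereal (d t t0 powr (1 / t))))"
    by (rule Limsup_compose_continuous_mono[symmetric]) (auto simp: eln_cont eln_mono)
  also have "\<dots> = Limsup at_top (\<lambda>t. SUP t0\<in>{0..}. eln (ereal (d t t0 powr (1 / t))))"
    by (subst eln_SUP) auto
  also have "\<dots> = R d"
    unfolding R_def
  proof (rule Limsup_eq)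
    have "eventually (\<lambda>t. t > (0::real)) at_top" by (rule eventually_gt_at_top)
    then show "eventually (\<lambda>t. (SUP t0\<in>{0..}. eln (ereal (d t t0 powr (1 / t)))) =
          (SUP t0\<in>{0..}. ereal (1 / t) * eln (ereal (d t t0)))) at_top"
      by eventually_elim (simp add: eln_powr d0)
  qed
  finally show ?thesis .
qed




declare transpose_matrix_vector[simp del]

definition isdiag :: "real^('m::finite \<times> 'n::finite) \<Rightarrow> bool" where
  "isdiag y \<longleftrightarrow> (\<forall>r r'. snd r = snd r' \<longrightarrow> y$r = y$r')"

lemma isdiag_diag_state: "isdiag (diag_state v)"
  by (simp add: isdiag_def diag_state_def)

lemma isdiag_eq: "isdiag y \<Longrightarrow> y = diag_state (\<chi> k. y$(i,k))"
  unfolding isdiag_def diag_state_def vec_eq_iff by (metis prod.collapse snd_conv vec_lambda_beta)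

lemma isdiag_add: "isdiag x \<Longrightarrow> isdiag y \<Longrightarrow> isdiag (x + y)"
  unfolding isdiag_def by (metis vector_add_component)
lemma isdiag_diff: "isdiag x \<Longrightarrow> isdiag y \<Longrightarrow> isdiag (x - y)"
  unfolding isdiag_def by (metis vector_minus_component)

lemma linear_diag_state: "linear (diag_state :: real^'n \<Rightarrow> real^('m::finite \<times> 'n::finite))"
  by (rule linearI) (simp_all add: diag_state_def vec_eq_iff)

lemma bl_diag_state: "bounded_linear (diag_state :: real^'n::finite \<Rightarrow> real^('m::finite \<times> 'n::finite))"
  using linear_diag_state linear_conv_bounded_linear by blast

lemma diff_comp_bl: "bounded_linear (\<lambda>y::real^'a::finite. y$r - y$r')"
  by (intro bounded_linear_sub bounded_linear_vec_nth)

lemma DF_diag: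
  fixes F :: "'m::finite \<Rightarrow> real^('m \<times> 'n::finite) \<Rightarrow> real \<Rightarrow> real^'n"
  assumes A1a: "\<And>i s t. t \<ge> 0 \<Longrightarrow> F i (diag_state s) t = f s"
    and A1b_deriv: "\<And>t x. t \<ge> 0 \<Longrightarrow>
          (stack_field F t has_derivative (\<lambda>h. DF t x *v h)) (at x)"
    and t: "t \<ge> 0"
  shows "isdiag (DF t (diag_state s) *v diag_state v)"
  unfolding isdiag_def
proof (intro allI impI)
  fix r r' :: "'m \<times> 'n" assume rr: "snd r = snd r'"
  define L where "L = (\<lambda>y::real^('m \<times> 'n). y$r - y$r')"
  have bL: "bounded_linear L" unfolding L_def by (rule diff_comp_bl)
  have gd: "((stack_field F t \<circ> diag_state) has_derivative ((\<lambda>h. DF t (diag_state s) *v h) \<circ> diag_state)) (at s)"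
    by (rule diff_chain_at[OF bounded_linear_imp_has_derivative[OF bl_diag_state] A1b_deriv[OF t]])
  have "((L \<circ> (stack_field F t \<circ> diag_state)) has_derivative (L \<circ> ((\<lambda>h. DF t (diag_state s) *v h) \<circ> diag_state))) (at s)"
    by (rule diff_chain_at[OF gd bounded_linear_imp_has_derivative[OF bL]])
  moreover have "L \<circ> (stack_field F t \<circ> diag_state) = (\<lambda>_. 0)"
    using rr by (auto simp: L_def stack_field_def A1a[OF t] fun_eq_iff)
  ultimately have "((\<lambda>_. 0) has_derivative (L \<circ> ((\<lambda>h. DF t (diag_state s) *v h) \<circ> diag_state))) (at s)"
    by simp
  then have "L \<circ> ((\<lambda>h. DF t (diag_state s) *v h) \<circ> diag_state) = (\<lambda>_. 0)"
    using has_derivative_const has_derivative_unique by blast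
  then have "L (DF t (diag_state s) *v diag_state v) = 0" by (metis comp_apply)
  then show "(DF t (diag_state s) *v diag_state v) $ r = (DF t (diag_state s) *v diag_state v) $ r'"
    by (simp add: L_def)
qed

lemma mv_comp: "(A *v x) $ i = A $ i \<bullet> x"
  by (simp add: matrix_vector_mult_def inner_vec_def mult.commute)

lemma norm_mv: "norm (A *v x) \<le> real CARD('m) * norm A * norm (x :: real^'n::finite)"
  for A :: "real^'n^'m::finite"
proof -
  have "norm (A *v x) \<le> (\<Sum>i\<in>UNIV. \<bar>(A *v x) $ i\<bar>)" by (rule norm_le_l1_cart)
  also have "\<dots> \<le> (\<Sum>i\<in>(UNIV::'m set). norm A * norm x)"
  proof (rule sum_mono)
    fix i
    have "\<bar>(A *v x) $ i\<bar> = \<bar>A $ i \<bullet> x\<bar>" by (simp add: mv_comp)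
    also have "\<dots> \<le> norm (A $ i) * norm x" by (rule Cauchy_Schwarz_ineq2)
    also have "\<dots> \<le> norm A * norm x" by (intro mult_right_mono Finite_Cartesian_Product.norm_nth_le) auto
    finally show "\<bar>(A *v x) $ i\<bar> \<le> norm A * norm x" .
  qed
  also have "\<dots> = real CARD('m) * norm A * norm x" by simp
  finally show ?thesis .
qed


lemma diag_state_scale: "diag_state (a *\<^sub>R x) = a *\<^sub>R diag_state x"
  by (simp add: diag_state_def vec_eq_iff)

lemma P1_mv: "P1_of P0 *v w = (diag_state ((1 / sqrt (real CARD('m))) *\<^sub>R (P0 *v w))
   :: real^('m::finite \<times> 'n::finite))"
  for P0 :: "real^'n^'n"
  by (simp add: vec_eq_iff matrix_vector_mult_def P1_of_def diag_state_def sum_divide_distrib)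

lemma isdiag_P1: "isdiag (P1_of P0 *v w :: real^('m::finite \<times> 'n::finite))"
  for P0 :: "real^'n^'n"
  by (simp add: P1_mv isdiag_diag_state)

lemma diag_in_P1:
  fixes P0 :: "real^'n::finite^'n"
  assumes "orthogonal_matrix P0"
  shows "(diag_state v :: real^('m::finite \<times> 'n)) = P1_of P0 *v (sqrt (real CARD('m)) *\<^sub>R (transpose P0 *v v))"
proof -
  have "P0 ** transpose P0 = mat 1" using assms by (simp add: orthogonal_matrix_def)
  then have "P0 *v (transpose P0 *v v) = v" by (simp add: matrix_vector_mul_assoc)
  moreover have "sqrt (real CARD('m)) > 0" by simp
  ultimately show ?thesis
    by (simp add: P1_mv matrix_vector_mult_scaleR diag_state_scale)
qed

lemma sum_UNIV_Plus: "(\<Sum>c\<in>(UNIV :: ('a::finite + 'b::finite) set). g c) = (\<Sum>a\<in>UNIV. g (Inl a)) + (\<Sum>b\<in>UNIV. g (Inr b))"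
proof -
  have "(\<Sum>c\<in>(UNIV :: ('a + 'b) set). g c) = (\<Sum>c\<in>(UNIV <+> UNIV :: ('a + 'b) set). g c)" by simp
  also have "\<dots> = (\<Sum>a\<in>UNIV. g (Inl a)) + (\<Sum>b\<in>UNIV. g (Inr b))"
    by (subst sum.Plus) auto
  finally show ?thesis .
qed

lemma P2tP1:
  fixes P0 :: "real^'n::finite^'n" and P2 :: "real^'k::finite^('m::finite \<times> 'n)"
  assumes "transpose (block_P (P1_of P0) P2) ** block_P (P1_of P0) P2 = mat 1"
  shows "transpose P2 ** P1_of P0 = 0"
proof -
  have "\<And>j l. (transpose P2 ** P1_of P0) $ j $ l = 0"
  proof -
    fix j l
    have "(transpose (block_P (P1_of P0) P2) ** block_P (P1_of P0) P2) $ Inr j $ Inl l = 0"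
      using assms by (simp add: mat_def)
    then show "(transpose P2 ** P1_of P0) $ j $ l = 0"
      by (simp add: matrix_matrix_mult_def transpose_def block_P_def)
  qed
  then show ?thesis by (simp add: vec_eq_iff)
qed

lemma P_decomp:
  fixes P0 :: "real^'n::finite^'n" and P2 :: "real^'k::finite^('m::finite \<times> 'n)"
  assumes "block_P (P1_of P0) P2 ** transpose (block_P (P1_of P0) P2) = mat 1"
  shows "x = P1_of P0 *v (transpose (P1_of P0) *v x) + P2 *v (transpose P2 *v x)"
proof -
  have "P1_of P0 ** transpose (P1_of P0) + P2 ** transpose P2 = mat 1"
  proof -
    have "\<And>r r'. (P1_of P0 ** transpose (P1_of P0) + P2 ** transpose P2) $ r $ r' =
        (block_P (P1_of P0) P2 ** transpose (block_P (P1_of P0) P2)) $ r $ r'"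
      by (simp add: matrix_matrix_mult_def transpose_def block_P_def sum_UNIV_Plus)
    then show ?thesis using assms by (simp add: vec_eq_iff)
  qed
  then have "(P1_of P0 ** transpose (P1_of P0) + P2 ** transpose P2) *v x = x" by simp
  then show ?thesis by (simp add: matrix_vector_mult_add_rdistrib matrix_vector_mul_assoc)
qed

lemma P2t_diag:
  fixes P0 :: "real^'n::finite^'n" and P2 :: "real^'k::finite^('m::finite \<times> 'n)"
  assumes "transpose (block_P (P1_of P0) P2) ** block_P (P1_of P0) P2 = mat 1"
    and "orthogonal_matrix P0" and "isdiag y"
  shows "transpose P2 *v y = 0"
proof -
  obtain v where "y = diag_state v" using isdiag_eq[OF assms(3)] by blast
  then have "y = P1_of P0 *v (sqrt (real CARD('m)) *\<^sub>R (transpose P0 *v v))"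
    using diag_in_P1[OF assms(2)] by simp
  then show ?thesis using P2tP1[OF assms(1)] by (simp add: matrix_vector_mul_assoc)
qed




lemma poly_integral:
  fixes a t c K :: real
  assumes "a \<le> t"
  shows "((\<lambda>s. c * (K * (s - a)) ^ k / fact k) has_integral
          (c * K ^ k * (t - a) ^ Suc k / fact (Suc k))) {a..t}"
proof -
  have "((\<lambda>s. c * (K * (s - a)) ^ k / fact k) has_integral
      ((\<lambda>s. c * K ^ k * (s - a) ^ Suc k / fact (Suc k)) t - (\<lambda>s. c * K ^ k * (s - a) ^ Suc k / fact (Suc k)) a)) {a..t}"
  proof (rule fundamental_theorem_of_calculus[OF assms])
    fix x assume "x \<in> {a..t}"
    have "((\<lambda>s. (s - a) ^ Suc k) has_real_derivative (of_nat (Suc k) * ((1 - 0) * (x - a) ^ (Suc k - Suc 0)))) (at x within {a..t})"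
      by (intro DERIV_power DERIV_diff DERIV_ident DERIV_const)
    then have "((\<lambda>s. (s - a) ^ Suc k) has_real_derivative (real (Suc k) * (x - a) ^ k)) (at x within {a..t})"
      by simp
    then have "((\<lambda>s. c * K ^ k * (s - a) ^ Suc k / fact (Suc k)) has_real_derivative
       (c * K ^ k * (real (Suc k) * (x - a) ^ k * 1) / fact (Suc k))) (at x within {a..t})"
      by (intro DERIV_cdivide DERIV_cmult) simp
    moreover have "c * K ^ k * (real (Suc k) * (x - a) ^ k * 1) / fact (Suc k) = c * (K * (x - a)) ^ k / fact k"
      by (simp only: power_mult_distrib fact_Suc) (simp add: divide_simps del: of_nat_Suc)
    ultimately have "((\<lambda>s. c * K ^ k * (s - a) ^ Suc k / fact (Suc k)) has_real_derivative
       c * (K * (x - a)) ^ k / fact k) (at x within {a..t})"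
      by metis
    then show "((\<lambda>s. c * K ^ k * (s - a) ^ Suc k / fact (Suc k)) has_vector_derivative
       c * (K * (x - a)) ^ k / fact k) (at x within {a..t})"
      unfolding has_real_derivative_iff_has_vector_derivative .
  qed
  then show ?thesis by simp
qed

lemma gronwall_zero:
  fixes g :: "real \<Rightarrow> real"
  assumes cont: "continuous_on {a..b} g"
    and K: "K \<ge> 0"
    and le: "\<And>t. t \<in> {a..b} \<Longrightarrow> g t \<le> K * integral {a..t} g"
    and g0: "\<And>t. t \<in> {a..b} \<Longrightarrow> g t \<ge> 0"
    and t: "t \<in> {a..b}"
  shows "g t = 0"
proof -
  have "compact (g ` {a..b})" by (rule compact_continuous_image[OF cont compact_Icc])
  then obtain c where c: "\<And>x. x \<in> {a..b} \<Longrightarrow> norm (g x) \<le> c"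
    using compact_imp_bounded bounded_iff by (metis imageI)
  have main: "\<forall>t\<in>{a..b}. g t \<le> c * (K * (t - a)) ^ k / fact k" for k
  proof (induction k)
    case 0
    show ?case
    proof
      fix t assume "t \<in> {a..b}"
      then have "\<bar>g t\<bar> \<le> c" using c by auto
      then show "g t \<le> c * (K * (t - a)) ^ 0 / fact 0" by simp
    qed
  next
    case (Suc k)
    show ?case
    proof
      fix t assume tt: "t \<in> {a..b}"
      then have sub: "{a..t} \<subseteq> {a..b}" by auto
      have "g t \<le> K * integral {a..t} g" by (rule le[OF tt])
      also have "integral {a..t} g \<le> integral {a..t} (\<lambda>s. c * (K * (s - a)) ^ k / fact k)"
      proof (rule integral_le)
        show "g integrable_on {a..t}"
          by (rule integrable_continuous_interval[OF continuous_on_subset[OF cont sub]])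
        show "(\<lambda>s. c * (K * (s - a)) ^ k / fact k) integrable_on {a..t}"
          using poly_integral[of a t c K k] tt by auto
        show "\<And>x. x \<in> {a..t} \<Longrightarrow> g x \<le> c * (K * (x - a)) ^ k / fact k"
          using Suc.IH sub by auto
      qed
      then have "K * integral {a..t} g \<le> K * integral {a..t} (\<lambda>s. c * (K * (s - a)) ^ k / fact k)"
        using K by (rule mult_left_mono)
      also have "integral {a..t} (\<lambda>s. c * (K * (s - a)) ^ k / fact k) = c * K ^ k * (t - a) ^ Suc k / fact (Suc k)"
        using tt by (intro integral_unique[OF poly_integral]) auto
      also have "K * (c * K ^ k * (t - a) ^ Suc k / fact (Suc k)) = c * (K * (t - a)) ^ Suc k / fact (Suc k)"
        by (simp add: power_mult_distrib)
      finally show "g t \<le> c * (K * (t - a)) ^ Suc k / fact (Suc k)" .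
    qed
  qed
  have "(\<lambda>k. (K * (t - a)) ^ k /\<^sub>R fact k) \<longlonglongrightarrow> 0"
    by (rule summable_LIMSEQ_zero[OF summable_exp_generic])
  then have "(\<lambda>k. c * ((K * (t - a)) ^ k / fact k)) \<longlonglongrightarrow> c * 0"
    by (intro tendsto_mult tendsto_const) (simp add: divide_inverse_commute)
  then have "g t \<le> c * 0"
    using main t by (intro tendsto_le[OF trivial_limit_sequentially _ tendsto_const]) auto
  then show ?thesis using g0[OF t] by simp
qed


lemma loc_bdd_compact:
  fixes \<phi> :: "'a::metric_space \<Rightarrow> real"
  assumes lb: "locally_bounded \<phi>" and C: "compact C"
  shows "\<exists>B. \<forall>x\<in>C. \<phi> x \<le> B"
proof -
  have "\<forall>x. \<exists>e>0. bounded (\<phi> ` ball x e)" using lb by (simp add: locally_bounded_def)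
  then obtain e where e: "\<And>x. e x > 0" "\<And>x. bounded (\<phi> ` ball x (e x))" by metis
  have "C \<subseteq> (\<Union>x\<in>C. ball x (e x))" using e(1) by auto
  then obtain D where D: "D \<subseteq> C" "finite D" "C \<subseteq> (\<Union>x\<in>D. ball x (e x))"
    using compactE_image[OF C, of C "\<lambda>x. ball x (e x)"] by auto
  have "\<forall>x\<in>D. \<exists>b. \<forall>y\<in>ball x (e x). \<phi> y \<le> b"
    using e(2) by (metis bounded_iff image_eqI abs_le_D1 real_norm_def)
  then obtain b where b: "\<And>x y. x \<in> D \<Longrightarrow> y \<in> ball x (e x) \<Longrightarrow> \<phi> y \<le> b x" by metis
  show ?thesis
  proof (intro exI ballI)
    fix y assume "y \<in> C"
    then obtain x where x: "x \<in> D" "y \<in> ball x (e x)" using D by auto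
    then have "\<phi> y \<le> b x" by (rule b)
    also have "b x \<le> Max (b ` D)" using x D by (intro Max_ge) auto
    finally show "\<phi> y \<le> Max (b ` D)" .
  qed
qed

lemma bl_mv_left: "bounded_linear (\<lambda>M::real^'n::finite^'m::finite. M *v d)"
proof -
  have "linear (\<lambda>M::real^'n::finite^'m::finite. M *v d)"
    by (rule linearI) (simp_all add: vec_eq_iff matrix_vector_mult_def sum_distrib_left mult.assoc distrib_right sum.distrib)
  then show ?thesis using linear_conv_bounded_linear by blast
qed

definition dev :: "'m \<Rightarrow> real^('m::finite \<times> 'n::finite) \<Rightarrow> real^('m \<times> 'n)" where
  "dev i0 z = z - diag_state (\<chi> k. z $ (i0, k))"

lemma bl_dev: "bounded_linear (dev i0)"
proof -
  have "linear (dev i0)"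
    by (rule linearI) (simp_all add: dev_def vec_eq_iff diag_state_def right_diff_distrib)
  then show ?thesis using linear_conv_bounded_linear by blast
qed

lemma dev_zero_iff: "dev i0 z = 0 \<longleftrightarrow> isdiag z"
proof
  assume "dev i0 z = 0"
  then have "z = diag_state (\<chi> k. z $ (i0, k))" by (simp add: dev_def)
  then show "isdiag z" by (metis isdiag_diag_state)
next
  assume "isdiag z" then show "dev i0 z = 0" using isdiag_eq[of z i0] by (simp add: dev_def)
qed

lemma dev_split: "z = dev i0 z + diag_state (\<chi> k. z $ (i0, k))"
  by (simp add: dev_def)


lemma invariance:
  fixes F :: "'m::finite \<Rightarrow> real^('m \<times> 'n::finite) \<Rightarrow> real \<Rightarrow> real^'n"
    and f :: "real^'n \<Rightarrow> real^'n"
    and DF :: "real \<Rightarrow> real^('m \<times> 'n) \<Rightarrow> real^('m \<times> 'n)^('m \<times> 'n)"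
    and S :: "real \<Rightarrow> real \<Rightarrow> real^'n"
    and U :: "real \<Rightarrow> real \<Rightarrow> real^('m \<times> 'n)^('m \<times> 'n)"
  assumes A1a: "\<And>i s t. t \<ge> 0 \<Longrightarrow> F i (diag_state s) t = f s"
    and A1b_deriv: "\<And>t x. t \<ge> 0 \<Longrightarrow>
          (stack_field F t has_derivative (\<lambda>h. DF t x *v h)) (at x)"
    and A1c: "\<exists>\<phi>. locally_bounded \<phi> \<and> (\<forall>t\<ge>0. \<forall>x. norm (DF t x) \<le> \<phi> x)"
    and S_ode: "\<And>t0 t. t0 \<ge> 0 \<Longrightarrow> t \<ge> t0 \<Longrightarrow>
          (S t0 has_vector_derivative f (S t0 t)) (at t within {t0..})"
    and U_int: "\<And>t0 t. t0 \<ge> 0 \<Longrightarrow> t \<ge> t0 \<Longrightarrow>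
          (\<lambda>\<tau>. DF \<tau> (diag_state (S t0 \<tau>)) ** U t0 \<tau>) integrable_on {t0..t}"
    and U_sol: "\<And>t0 t. t0 \<ge> 0 \<Longrightarrow> t \<ge> t0 \<Longrightarrow>
          U t0 t = mat 1 + integral {t0..t} (\<lambda>\<tau>. DF \<tau> (diag_state (S t0 \<tau>)) ** U t0 \<tau>)"
    and t0: "t0 \<ge> 0" and T: "T \<ge> t0"
  shows "isdiag (U t0 T *v diag_state v)"
proof -
  define A where "A \<tau> = DF \<tau> (diag_state (S t0 \<tau>))" for \<tau>
  define d where "d = (diag_state v :: real^('m \<times> 'n))"
  define i0 :: 'm where "i0 = undefined"
  define w where "w \<tau> = dev i0 (U t0 \<tau> *v d)" for \<tau>
  define h where "h \<tau> = dev i0 ((A \<tau> ** U t0 \<tau>) *v d)" for \<tau>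
  obtain \<phi> where phi: "locally_bounded \<phi>" "\<forall>t\<ge>0. \<forall>x. norm (DF t x) \<le> \<phi> x" using A1c by blast
  have contS: "continuous_on {t0..T} (S t0)"
    unfolding continuous_on_eq_continuous_within
  proof
    fix x assume x: "x \<in> {t0..T}"
    then have "continuous (at x within {t0..}) (S t0)"
      using S_ode[OF t0, of x] has_vector_derivative_continuous by auto
    then show "continuous (at x within {t0..T}) (S t0)" by (rule continuous_within_subset) auto
  qed
  have "continuous_on {t0..T} (\<lambda>\<tau>. diag_state (S t0 \<tau>) :: real^('m \<times> 'n))"
    by (rule continuous_on_compose2[OF linear_continuous_on[OF bl_diag_state] contS]) auto
  then have "compact ((\<lambda>\<tau>. diag_state (S t0 \<tau>) :: real^('m \<times> 'n)) ` {t0..T})"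
    by (rule compact_continuous_image) simp
  then obtain B0 where B0: "\<forall>x\<in>(\<lambda>\<tau>. diag_state (S t0 \<tau>) :: real^('m \<times> 'n)) ` {t0..T}. \<phi> x \<le> B0"
    using loc_bdd_compact[OF phi(1)] by blast
  define B where "B = max B0 0"
  have AB: "norm (A \<tau>) \<le> B" if "\<tau> \<in> {t0..T}" for \<tau>
  proof -
    have "\<tau> \<ge> 0" using that t0 by auto
    then have "norm (A \<tau>) \<le> \<phi> (diag_state (S t0 \<tau>))" using phi(2) unfolding A_def by blast
    also have "\<dots> \<le> B0" using B0 that by blast
    finally show ?thesis unfolding B_def by linarith
  qed
  obtain Kd where Kd: "Kd > 0" "\<And>x::real^('m \<times> 'n). norm (dev i0 x) \<le> norm x * Kd"
    using bounded_linear.pos_bounded[OF bl_dev] by blast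
  define K where "K = Kd * real CARD('m \<times> 'n) * B"
  have K0: "K \<ge> 0" unfolding K_def B_def using Kd by auto
  have blL: "bounded_linear (\<lambda>M. dev i0 (M *v d))" by (rule bounded_linear_compose[OF bl_dev bl_mv_left])
  have hint: "h integrable_on {t0..T}"
    using integrable_linear[OF U_int[OF t0 T] blL] unfolding h_def A_def comp_def .
  have lin_dev: "linear (dev i0)" using bl_dev bounded_linear.linear by blast
  have weq: "w t = integral {t0..t} h" if "t \<in> {t0..T}" for t
  proof -
    have "U t0 t = mat 1 + integral {t0..t} (\<lambda>\<tau>. A \<tau> ** U t0 \<tau>)" using U_sol[OF t0] that unfolding A_def by auto
    then have "w t = dev i0 d + dev i0 (integral {t0..t} (\<lambda>\<tau>. A \<tau> ** U t0 \<tau>) *v d)"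
      unfolding w_def by (simp add: matrix_vector_mult_add_rdistrib linear_add[OF lin_dev])
    also have "dev i0 d = 0" using dev_zero_iff isdiag_diag_state d_def by auto
    also have "dev i0 (integral {t0..t} (\<lambda>\<tau>. A \<tau> ** U t0 \<tau>) *v d) = integral {t0..t} h"
      using integral_linear[OF U_int[OF t0, of t] blL] that unfolding h_def A_def comp_def by auto
    finally show ?thesis by simp
  qed
  have wcont: "continuous_on {t0..T} w"
    by (rule continuous_on_eq[OF indefinite_integral_continuous_1[OF hint]]) (simp add: weq)
  have hbound: "norm (h \<tau>) \<le> K * norm (w \<tau>)" if "\<tau> \<in> {t0..T}" for \<tau>
  proof -
    have tau0: "\<tau> \<ge> 0" using that t0 by auto
    define c :: "real^('m \<times> 'n)" where "c = diag_state (\<chi> k. (U t0 \<tau> *v d) $ (i0,k))"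
    have "(A \<tau> ** U t0 \<tau>) *v d = A \<tau> *v (U t0 \<tau> *v d)" by (simp add: matrix_vector_mul_assoc)
    also have "U t0 \<tau> *v d = w \<tau> + c" unfolding w_def c_def by (rule dev_split)
    finally have "h \<tau> = dev i0 (A \<tau> *v w \<tau>) + dev i0 (A \<tau> *v c)"
      unfolding h_def by (simp add: matrix_vector_right_distrib linear_add[OF lin_dev])
    moreover have "dev i0 (A \<tau> *v c) = 0"
      using DF_diag[OF A1a A1b_deriv tau0] dev_zero_iff unfolding A_def c_def by blast
    ultimately have "h \<tau> = dev i0 (A \<tau> *v w \<tau>)" by simp
    then have "norm (h \<tau>) \<le> norm (A \<tau> *v w \<tau>) * Kd" using Kd(2) by metis
    also have "norm (A \<tau> *v w \<tau>) * Kd \<le> (real CARD('m \<times> 'n) * norm (A \<tau>) * norm (w \<tau>)) * Kd"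
      using Kd by (intro mult_right_mono norm_mv) auto
    also have "\<dots> \<le> (real CARD('m \<times> 'n) * B * norm (w \<tau>)) * Kd"
      using Kd AB[OF that] by (intro mult_right_mono mult_left_mono) auto
    also have "\<dots> = K * norm (w \<tau>)" unfolding K_def by (simp add: mult_ac)
    finally show ?thesis .
  qed
  define g where "g \<tau> = norm (w \<tau>)" for \<tau>
  have gcont: "continuous_on {t0..T} g" unfolding g_def by (intro continuous_on_norm wcont)
  have gle: "g t \<le> K * integral {t0..t} g" if t: "t \<in> {t0..T}" for t
  proof -
    have sub: "{t0..t} \<subseteq> {t0..T}" using t by auto
    have "g t = norm (integral {t0..t} h)" unfolding g_def using weq[OF t] by simp
    also have "\<dots> \<le> integral {t0..t} (\<lambda>\<tau>. K * g \<tau>)"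
    proof (rule integral_norm_bound_integral)
      show "h integrable_on {t0..t}" by (rule integrable_on_subinterval[OF hint sub])
      show "(\<lambda>\<tau>. K * g \<tau>) integrable_on {t0..t}"
        by (intro integrable_continuous_interval continuous_on_mult continuous_on_const continuous_on_subset[OF gcont sub])
      show "\<And>x. x \<in> {t0..t} \<Longrightarrow> norm (h x) \<le> K * g x"
        using hbound sub unfolding g_def by auto
    qed
    also have "\<dots> = K * integral {t0..t} g" by simp
    finally show ?thesis .
  qed
  have "g T = 0"
    by (rule gronwall_zero[OF gcont K0 gle]) (auto simp: g_def T)
  then have "w T = 0" by (simp add: g_def)
  then show ?thesis using dev_zero_iff unfolding w_def d_def by blast
qed




lemma norm_le_sum_nth: "norm (x :: 'a::real_normed_vector^'n::finite) \<le> (\<Sum>i\<in>UNIV. norm (x $ i))"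
  by (simp add: norm_vec_def L2_set_le_sum)

lemma diam_ge: "norm (block_row V i - block_row V j) \<le> diam_mat V"
  unfolding diam_mat_def by (rule Max_ge) (auto intro: image_eqI[where x="(i,j)"])

lemma diam_nonneg: "0 \<le> diam_mat V"
  using diam_ge[of V undefined undefined] norm_ge_zero order_trans by blast

lemma triple_mv: "(A ** B ** C) *v u = A *v (B *v (C *v u))"
  by (simp add: matrix_vector_mul_assoc matrix_mul_assoc)

lemma upper_bound:
  fixes P0 :: "real^'n::finite^'n" and P2 :: "real^'k::finite^('m::finite \<times> 'n)"
  assumes Po: "transpose (block_P (P1_of P0) P2) ** block_P (P1_of P0) P2 = mat 1"
    and P0o: "orthogonal_matrix P0"
  shows "\<exists>C>0. \<forall>V. norm ((transpose P2 ** V ** P2) *v u) \<le> C * diam_mat V"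
proof -
  obtain K2 where K2: "K2 > 0" "\<And>z::real^('m \<times> 'n). norm (transpose P2 *v z) \<le> norm z * K2"
    using bounded_linear.pos_bounded[OF matrix_vector_mul_bounded_linear[of "transpose P2"]] by blast
  define x where "x = P2 *v u"
  define C where "C = K2 * real CARD('m \<times> 'n) * norm x + 1"
  have C0: "C > 0" unfolding C_def using K2 by (simp add: add_nonneg_pos)
  define i0 :: 'm where "i0 = undefined"
  show ?thesis
  proof (intro exI[of _ C] conjI allI C0)
    fix V :: "real^('m \<times> 'n)^('m \<times> 'n)"
    define y where "y = V *v x"
    have "y = dev i0 y + diag_state (\<chi> k. y $ (i0, k))" by (rule dev_split)
    then have "transpose P2 *v y = transpose P2 *v dev i0 y + transpose P2 *v diag_state (\<chi> k. y $ (i0, k))"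
      by (metis matrix_vector_right_distrib)
    also have "transpose P2 *v diag_state (\<chi> k. y $ (i0, k)) = 0"
      by (rule P2t_diag[OF Po P0o isdiag_diag_state])
    finally have eq: "transpose P2 *v y = transpose P2 *v dev i0 y" by simp
    have comp: "\<bar>dev i0 y $ r\<bar> \<le> diam_mat V * norm x" for r
    proof -
      obtain i k where r: "r = (i, k)" by (cases r)
      have "dev i0 y $ r = y $ (i,k) - y $ (i0, k)" by (simp add: dev_def diag_state_def r)
      also have "\<dots> = (block_row V i - block_row V i0) $ k \<bullet> x"
        by (simp add: y_def mv_comp block_row_def inner_diff_left)
      finally have "\<bar>dev i0 y $ r\<bar> \<le> norm ((block_row V i - block_row V i0) $ k) * norm x"
        using Cauchy_Schwarz_ineq2 by simp
      also have "\<dots> \<le> norm (block_row V i - block_row V i0) * norm x"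
        by (intro mult_right_mono Finite_Cartesian_Product.norm_nth_le) auto
      also have "\<dots> \<le> diam_mat V * norm x"
        by (intro mult_right_mono diam_ge) auto
      finally show ?thesis .
    qed
    have "norm (dev i0 y) \<le> (\<Sum>r\<in>UNIV. \<bar>dev i0 y $ r\<bar>)" by (rule norm_le_l1_cart)
    also have "\<dots> \<le> (\<Sum>r\<in>(UNIV :: ('m \<times> 'n) set). diam_mat V * norm x)" by (intro sum_mono comp)
    also have "\<dots> = real CARD('m \<times> 'n) * diam_mat V * norm x" by simp
    finally have nd: "norm (dev i0 y) \<le> real CARD('m \<times> 'n) * diam_mat V * norm x" .
    have "(transpose P2 ** V ** P2) *v u = transpose P2 *v y"
      by (simp add: triple_mv y_def x_def)
    then have "norm ((transpose P2 ** V ** P2) *v u) = norm (transpose P2 *v dev i0 y)"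
      using eq by simp
    also have "\<dots> \<le> norm (dev i0 y) * K2" by (rule K2(2))
    also have "\<dots> \<le> (real CARD('m \<times> 'n) * diam_mat V * norm x) * K2"
      using K2 nd by (intro mult_right_mono) auto
    also have "\<dots> = (K2 * real CARD('m \<times> 'n) * norm x) * diam_mat V" by (simp add: mult_ac)
    also have "\<dots> \<le> C * diam_mat V"
      unfolding C_def using diam_nonneg[of V] by (intro mult_right_mono) auto
    finally show "norm ((transpose P2 ** V ** P2) *v u) \<le> C * diam_mat V" .
  qed
qed


lemma lower_bound:
  fixes P0 :: "real^'n::finite^'n" and P2 :: "real^'k::finite^('m::finite \<times> 'n)"
  assumes Po1: "transpose (block_P (P1_of P0) P2) ** block_P (P1_of P0) P2 = mat 1"
    and Po2: "block_P (P1_of P0) P2 ** transpose (block_P (P1_of P0) P2) = mat 1"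
    and P0o: "orthogonal_matrix P0"
  shows "\<exists>C>0. \<forall>V. (\<forall>v. isdiag (V *v diag_state v)) \<longrightarrow>
     diam_mat V \<le> C * Max (range (\<lambda>q. norm ((transpose P2 ** V ** P2) *v axis q (1::real))))"
proof -
  obtain K2 where K2: "K2 > 0" "\<And>z::real^('m \<times> 'n). norm (transpose P2 *v z) \<le> norm z * K2"
    using bounded_linear.pos_bounded[OF matrix_vector_mul_bounded_linear[of "transpose P2"]] by blast
  obtain K3 where K3: "K3 > 0" "\<And>z::real^'k. norm (P2 *v z) \<le> norm z * K3"
    using bounded_linear.pos_bounded[OF matrix_vector_mul_bounded_linear[of "P2"]] by blast
  define C where "C = real CARD('n) * real CARD('m \<times> 'n) * (2 * K3) * (real CARD('k) * (real CARD('k) * real CARD('k)) * K2)"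
  have C0: "C > 0" unfolding C_def using K2 K3 by simp
  show ?thesis
  proof (intro exI[of _ C] conjI allI impI C0)
    fix V :: "real^('m \<times> 'n)^('m \<times> 'n)"
    assume Vinv: "\<forall>v. isdiag (V *v diag_state v)"
    define Ut where "Ut = transpose P2 ** V ** P2"
    define M where "M = Max (range (\<lambda>q. norm (Ut *v axis q (1::real))))"
    have Mge: "norm (Ut *v axis q 1) \<le> M" for q unfolding M_def by (rule Max_ge) auto
    have M0: "M \<ge> 0" using Mge[of undefined] norm_ge_zero order_trans by blast
    have normUt: "norm Ut \<le> real CARD('k) * (real CARD('k) * M)"
    proof -
      have "norm Ut \<le> (\<Sum>i\<in>UNIV. norm (Ut $ i))" by (rule norm_le_sum_nth)
      also have "\<dots> \<le> (\<Sum>i\<in>(UNIV::'k set). real CARD('k) * M)"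
      proof (rule sum_mono)
        fix i
        have "norm (Ut $ i) \<le> (\<Sum>q\<in>UNIV. \<bar>Ut $ i $ q\<bar>)" by (rule norm_le_l1_cart)
        also have "\<dots> \<le> (\<Sum>q\<in>(UNIV::'k set). M)"
        proof (rule sum_mono)
          fix q
          have "Ut $ i $ q = (Ut *v axis q 1) $ i" by (simp add: mv_comp inner_axis)
          then have "\<bar>Ut $ i $ q\<bar> \<le> norm (Ut *v axis q 1)" by (simp add: component_le_norm_cart)
          then show "\<bar>Ut $ i $ q\<bar> \<le> M" using Mge[of q] by linarith
        qed
        also have "\<dots> = real CARD('k) * M" by simp
        finally show "norm (Ut $ i) \<le> real CARD('k) * M" .
      qed
      also have "\<dots> = real CARD('k) * (real CARD('k) * M)" by simp
      finally show ?thesis .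
    qed
    define Q where "Q = real CARD('k) * (real CARD('k) * (real CARD('k) * M)) * K2"
    have Qb: "norm (Ut *v (transpose P2 *v axis r 1)) \<le> Q" for r
    proof -
      have nb: "norm (transpose P2 *v axis r (1::real)) \<le> K2" using K2(2)[of "axis r 1"] by simp
      have "norm (Ut *v (transpose P2 *v axis r 1)) \<le> real CARD('k) * norm Ut * norm (transpose P2 *v axis r 1)"
        by (rule norm_mv)
      also have "\<dots> \<le> real CARD('k) * (real CARD('k) * (real CARD('k) * M)) * K2"
        using normUt nb M0 by (intro mult_mono mult_left_mono) auto
      finally show ?thesis unfolding Q_def .
    qed
    have entry: "\<bar>V $ (i, k) $ r - V $ (j, k) $ r\<bar> \<le> 2 * K3 * Q" for i j k r
    proof -
      define z where "z = V *v axis r (1::real)"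
      define br where "br = transpose P2 *v axis r (1::real)"
      define a where "a = transpose (P1_of P0) *v axis r (1::real)"
      have zc: "z $ s = V $ s $ r" for s by (simp add: z_def mv_comp inner_axis)
      have ax: "axis r (1::real) = P1_of P0 *v a + P2 *v br"
        unfolding a_def br_def by (rule P_decomp[OF Po2])
      define y2 where "y2 = V *v (P2 *v br)"
      define a' where "a' = transpose (P1_of P0) *v y2"
      have y2d: "y2 = P1_of P0 *v a' + P2 *v (transpose P2 *v y2)"
        unfolding a'_def by (rule P_decomp[OF Po2])
      have y2u: "transpose P2 *v y2 = Ut *v br" by (simp add: y2_def Ut_def triple_mv)
      define D where "D = V *v (P1_of P0 *v a) + P1_of P0 *v a'"
      have "isdiag (V *v (P1_of P0 *v a))"
        using Vinv isdiag_eq[OF isdiag_P1[of P0 a], of undefined] by metis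
      then have Dd: "isdiag D" unfolding D_def by (intro isdiag_add isdiag_P1)
      define e where "e = P2 *v (Ut *v br)"
      have "z = V *v (P1_of P0 *v a) + y2"
        unfolding z_def y2_def by (subst ax) (simp only: matrix_vector_right_distrib)
      also have "y2 = P1_of P0 *v a' + e"
        using y2d[unfolded y2u] unfolding e_def .
      finally have "z = D + e" unfolding D_def by (simp add: add.assoc)
      then have "z $ (i, k) - z $ (j, k) = e $ (i, k) - e $ (j, k)"
        using Dd unfolding isdiag_def by simp
      then have "\<bar>V $ (i, k) $ r - V $ (j, k) $ r\<bar> \<le> \<bar>e $ (i, k)\<bar> + \<bar>e $ (j, k)\<bar>"
        by (simp add: zc)
      also have "\<dots> \<le> norm e + norm e" by (intro add_mono component_le_norm_cart)
      also have "norm e \<le> norm (Ut *v br) * K3" unfolding e_def by (rule K3(2))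
      also have "\<dots> \<le> Q * K3" using Qb[of r] K3 unfolding br_def by (intro mult_right_mono) auto
      finally show ?thesis by simp
    qed
    have row: "norm (block_row V i - block_row V j) \<le> real CARD('n) * (real CARD('m \<times> 'n) * (2 * K3 * Q))" for i j
    proof -
      have "norm (block_row V i - block_row V j) \<le> (\<Sum>k\<in>UNIV. norm ((block_row V i - block_row V j) $ k))"
        by (rule norm_le_sum_nth)
      also have "\<dots> \<le> (\<Sum>k\<in>(UNIV::'n set). real CARD('m \<times> 'n) * (2 * K3 * Q))"
      proof (rule sum_mono)
        fix k
        have "norm ((block_row V i - block_row V j) $ k) \<le> (\<Sum>r\<in>UNIV. \<bar>(block_row V i - block_row V j) $ k $ r\<bar>)"
          by (rule norm_le_l1_cart)
        also have "\<dots> \<le> (\<Sum>r\<in>(UNIV::('m \<times> 'n) set). 2 * K3 * Q)"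
          by (intro sum_mono) (simp add: block_row_def entry)
        also have "\<dots> = real CARD('m \<times> 'n) * (2 * K3 * Q)" by simp
        finally show "norm ((block_row V i - block_row V j) $ k) \<le> real CARD('m \<times> 'n) * (2 * K3 * Q)" .
      qed
      also have "\<dots> = real CARD('n) * (real CARD('m \<times> 'n) * (2 * K3 * Q))" by simp
      finally show ?thesis .
    qed
    have "diam_mat V \<le> real CARD('n) * (real CARD('m \<times> 'n) * (2 * K3 * Q))"
      unfolding diam_mat_def using row by (intro Max.boundedI) auto
    also have "\<dots> = C * M" unfolding C_def Q_def by (simp add: mult_ac)
    finally show "diam_mat V \<le> C * Max (range (\<lambda>q. norm ((transpose P2 ** V ** P2) *v axis q (1::real))))"
      unfolding M_def Ut_def .
  qed
qed




theorem lemma6: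
  fixes F :: "'m::finite \<Rightarrow> real^('m \<times> 'n::finite) \<Rightarrow> real \<Rightarrow> real^'n"
    and f :: "real^'n \<Rightarrow> real^'n"
    and DF :: "real \<Rightarrow> real^('m \<times> 'n) \<Rightarrow> real^('m \<times> 'n)^('m \<times> 'n)"
    and P0 :: "real^'n^'n"
    and P2 :: "real^'k::finite^('m \<times> 'n)"
    and s0 :: "real^'n"
    and S :: "real \<Rightarrow> real \<Rightarrow> real^'n"
    and U :: "real \<Rightarrow> real \<Rightarrow> real^('m \<times> 'n)^('m \<times> 'n)"
  assumes A1a: "\<And>i s t. t \<ge> 0 \<Longrightarrow> F i (diag_state s) t = f s"
    and A1b_deriv: "\<And>t x. t \<ge> 0 \<Longrightarrow>
          (stack_field F t has_derivative (\<lambda>h. DF t x *v h)) (at x)"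
    and A1b_cont: "\<And>t. t \<ge> 0 \<Longrightarrow> continuous_on UNIV (DF t)"
    and A1c: "\<exists>\<phi>. locally_bounded \<phi> \<and> (\<forall>t\<ge>0. \<forall>x. norm (DF t x) \<le> \<phi> x)"
    and A1d: "\<exists>K. locally_bounded (\<lambda>(x, y). K x y) \<and>
          (\<forall>t\<ge>0. \<forall>x y. norm (DF t x - DF t y) \<le> K x y * norm (x - y))"
    and A1e_F: "\<And>i x. (\<lambda>t. F i x t) measurable_on {0..}"
    and A1e_DF: "\<And>x. (\<lambda>t. DF t x) measurable_on {0..}"
    and P0_orth: "orthogonal_matrix P0"
    and P_orth: "transpose (block_P (P1_of P0) P2) ** block_P (P1_of P0) P2 = mat 1"
                "block_P (P1_of P0) P2 ** transpose (block_P (P1_of P0) P2) = mat 1"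
    and S_sol: "\<And>t0. t0 \<ge> 0 \<Longrightarrow> S t0 t0 = s0"
    and S_ode: "\<And>t0 t. t0 \<ge> 0 \<Longrightarrow> t \<ge> t0 \<Longrightarrow>
          (S t0 has_vector_derivative f (S t0 t)) (at t within {t0..})"
    and U_int: "\<And>t0 t. t0 \<ge> 0 \<Longrightarrow> t \<ge> t0 \<Longrightarrow>
          (\<lambda>\<tau>. DF \<tau> (diag_state (S t0 \<tau>)) ** U t0 \<tau>) integrable_on {t0..t}"
    and U_sol: "\<And>t0 t. t0 \<ge> 0 \<Longrightarrow> t \<ge> t0 \<Longrightarrow>
          U t0 t = mat 1 + integral {t0..t} (\<lambda>\<tau>. DF \<tau> (diag_state (S t0 \<tau>)) ** U t0 \<tau>)"
  shows "lambda_P P2 U = eln (diam_rate U)"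
proof -
  have Vinv: "\<forall>v. isdiag (U t0 (t + t0) *v diag_state v)" if "t > 0" "t0 \<ge> 0" for t t0
  proof
    fix v
    show "isdiag (U t0 (t + t0) *v diag_state v)"
      using invariance[OF A1a A1b_deriv A1c S_ode U_int U_sol that(2), of "t + t0" v] that by auto
  qed
  have LP: "lambda_P P2 U = (SUP u. R (\<lambda>t t0. norm ((transpose P2 ** U t0 (t + t0) ** P2) *v u)))"
    unfolding lambda_P_def lyap_P_def R_def by simp
  have ED: "eln (diam_rate U) = R (\<lambda>t t0. diam_mat (U t0 (t + t0)))"
    unfolding diam_rate_def by (rule eln_diam_rate) (rule diam_nonneg)
  have Max0: "0 \<le> Max (range (\<lambda>q. norm ((transpose P2 ** U t0 (t + t0) ** P2) *v axis q (1::real))))" for t t0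
    by (rule order_trans[OF norm_ge_zero Max_ge]) auto
  show ?thesis
  proof (rule antisym)
    show "lambda_P P2 U \<le> eln (diam_rate U)"
      unfolding LP ED
    proof (rule SUP_least)
      fix u
      obtain C where C: "C > 0" "\<forall>V. norm ((transpose P2 ** V ** P2) *v u) \<le> C * diam_mat V"
        using upper_bound[OF P_orth(1) P0_orth] by blast
      show "R (\<lambda>t t0. norm ((transpose P2 ** U t0 (t + t0) ** P2) *v u)) \<le> R (\<lambda>t t0. diam_mat (U t0 (t + t0)))"
        by (rule R_mono[where C = C]) (use C diam_nonneg in auto)
    qed
  next
    obtain C where C: "C > 0" "\<forall>V. (\<forall>v. isdiag (V *v diag_state v)) \<longrightarrow>
       diam_mat V \<le> C * Max (range (\<lambda>q. norm ((transpose P2 ** V ** P2) *v axis q (1::real))))"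
      using lower_bound[OF P_orth(1) P_orth(2) P0_orth] by blast
    have "R (\<lambda>t t0. diam_mat (U t0 (t + t0))) \<le>
        R (\<lambda>t t0. Max (range (\<lambda>q. norm ((transpose P2 ** U t0 (t + t0) ** P2) *v axis q (1::real)))))"
      by (rule R_mono[where C = C]) (use C Vinv diam_nonneg Max0 in auto)
    also have "\<dots> \<le> Max (range (\<lambda>q. R (\<lambda>t t0. norm ((transpose P2 ** U t0 (t + t0) ** P2) *v axis q (1::real)))))"
      by (rule R_Max[where h = "\<lambda>q t t0. norm ((transpose P2 ** U t0 (t + t0) ** P2) *v axis q (1::real))"]) simp
    also have "\<dots> \<le> (SUP u. R (\<lambda>t t0. norm ((transpose P2 ** U t0 (t + t0) ** P2) *v u)))"
      by (rule Max.boundedI) (auto intro: SUP_upper)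
    finally show "eln (diam_rate U) \<le> lambda_P P2 U" unfolding LP ED .
  qed
qed


end
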